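(* Let $1\le k\le n-1$. There is $\varepsilon>0$ (depending on $k,n$) such that the following holds whenever $\alpha_1,\dots,\alpha_{k-1}>0$ satisfy $\alpha_{i+1}<\varepsilon\,\alpha_i$ for all $i$. Define $w:V_{k,n}\to\mathbb{R}$ by $w(i_1,\dots,i_k)=\sum_{1\le a<b\le k}\alpha_{b-a}\,i_a i_b$. Let $\{I,J\}$ and $\{X,Y\}$ be two different pairs of elements of $V_{k,n}$ such that $I$ and $J$ are noncrossing and $\chi_I+\chi_J=\chi_X+\chi_Y$. Then $X$ and $Y$ are crossing (i.e. not noncrossing), and $w(I)+w(J)<w(X)+w(Y)$.
   Context: $V_{k,n}$ denotes the set of integer vectors $I=(i_1,\dots,i_k)$ with $1\le i_1<\dots<i_k\le n$. Two arcs $(p<p')$ and $(q<q')$ cross if $p<q<p'<q'$ or $q<p<q'<p'$. $I,J\in V_{k,n}$ are noncrossing if for all indices $1\le a<b\le k$ such that $i_\ell=j_\ell$ for all $a<\ell<b$, the arcs $(i_a<i_b)$ and $(j_a<j_b)$ do not cross. Let $P_{k,n}=\{(a,b):a\in[k],b\in[n-k]\}$ and $\chi_I\in\{0,1\}^{P_{k,n}}$ with $(\chi_I)_{a,b}=1$ iff $i_a\le a+b-1$. *)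

theory Defs
  imports Complex_Main
begin

text \<open>Vectors I = (i_1,...,i_k) are represented as lists of length k; the entry
  i_a (1-based) is  I ! (a - 1).\<close>

definition vent :: "nat list \<Rightarrow> nat \<Rightarrow> nat" where
  "vent I a = I ! (a - 1)"

definition Vkn :: "nat \<Rightarrow> nat \<Rightarrow> nat list set" where
  "Vkn k n = {I. length I = k \<and> sorted_wrt (<) I \<and> set I \<subseteq> {1..n}}"

definition arcs_cross :: "nat \<Rightarrow> nat \<Rightarrow> nat \<Rightarrow> nat \<Rightarrow> bool" where
  "arcs_cross p p' q q' \<longleftrightarrow> (p < q \<and> q < p' \<and> p' < q') \<or> (q < p \<and> p < q' \<and> q' < p')"

definition noncrossing :: "nat \<Rightarrow> nat list \<Rightarrow> nat list \<Rightarrow> bool" where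
  "noncrossing k I J \<longleftrightarrow>
     (\<forall>a b. 1 \<le> a \<and> a < b \<and> b \<le> k \<and> (\<forall>l. a < l \<and> l < b \<longrightarrow> vent I l = vent J l)
        \<longrightarrow> \<not> arcs_cross (vent I a) (vent I b) (vent J a) (vent J b))"

definition Pkn :: "nat \<Rightarrow> nat \<Rightarrow> (nat \<times> nat) set" where
  "Pkn k n = {1..k} \<times> {1..n - k}"

definition chi :: "nat \<Rightarrow> nat \<Rightarrow> nat list \<Rightarrow> nat \<times> nat \<Rightarrow> int" where
  "chi k n I = (\<lambda>(a, b). if (a, b) \<in> Pkn k n \<and> vent I a \<le> a + b - 1 then 1 else 0)"

definition wt :: "nat \<Rightarrow> (nat \<Rightarrow> real) \<Rightarrow> nat list \<Rightarrow> real" where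
  "wt k \<alpha> I = (\<Sum>(a, b) \<in> {(a, b). 1 \<le> a \<and> a < b \<and> b \<le> k}.
                   \<alpha> (b - a) * real (vent I a) * real (vent I b))"

end

theory Submission imports Defs begin

lemma sorted_gap:
  assumes "sorted_wrt (<) (xs::nat list)" "j < length xs" "i \<le> j"
  shows "xs!i + (j - i) \<le> xs!j"
  using assms(2,3)
proof (induction j)
  case 0 then show ?case by simp
next
  case (Suc j)
  show ?case
  proof (cases "i = Suc j")
    case True then show ?thesis by simp
  next
    case False
    then have "i \<le> j" using Suc by simp
    then have "xs!i + (j - i) \<le> xs!j" using Suc by simp
    moreover have "xs!j < xs!(Suc j)" using assms(1) Suc.prems by (simp add: sorted_wrt_nth_less)
    ultimately show ?thesis using \<open>i \<le> j\<close> by linarith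
  qed
qed

lemma vent_bounds:
  assumes "I \<in> Vkn k n" "1 \<le> a" "a \<le> k"
  shows "a \<le> vent I a \<and> vent I a + (k - a) \<le> n"
proof -
  have L: "length I = k" and S: "sorted_wrt (<) I" and R: "set I \<subseteq> {1..n}"
    using assms(1) by (auto simp: Vkn_def)
  have "I!0 \<in> set I" using L assms by simp
  then have "1 \<le> I!0" using R by auto
  moreover have "I!0 + (a - 1 - 0) \<le> I!(a-1)" using sorted_gap[OF S, of "a-1" 0] L assms by simp
  moreover have "I!(a-1) + (k - 1 - (a-1)) \<le> I!(k-1)" using sorted_gap[OF S, of "k-1" "a-1"] L assms by simp
  moreover have "I!(k-1) \<in> set I" using L assms by simp
  then have "I!(k-1) \<le> n" using R by auto
  ultimately show ?thesis using assms unfolding vent_def by linarith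
qed

lemma vent_less:
  assumes "I \<in> Vkn k n" "1 \<le> a" "a < b" "b \<le> k"
  shows "vent I a < vent I b"
proof -
  have "I!(a-1) < I!(b-1)" using assms sorted_wrt_nth_less[of "(<)" I "a-1" "b-1"] by (auto simp: Vkn_def)
  then show ?thesis by (simp add: vent_def)
qed

lemma vent_le_n:
  assumes "I \<in> Vkn k n" "1 \<le> a" "a \<le> k"
  shows "vent I a \<le> n"
  using vent_bounds[OF assms] by linarith

lemma vent_eq_list:
  assumes "I \<in> Vkn k n" "X \<in> Vkn k n" "\<forall>a. 1 \<le> a \<and> a \<le> k \<longrightarrow> vent X a = vent I a"
  shows "X = I"
proof (rule nth_equalityI)
  show "length X = length I" using assms by (simp add: Vkn_def)
  fix t assume "t < length X"
  then have "t < k" using assms by (simp add: Vkn_def)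
  then show "X!t = I!t" using assms(3)[rule_format, of "t+1"] by (simp add: vent_def)
qed

lemma pair_eq:
  fixes i j x y lo hi :: nat
  assumes H: "\<forall>T. lo \<le> T \<and> T < hi \<longrightarrow> (of_bool (i \<le> T) + of_bool (j \<le> T) :: int) = of_bool (x \<le> T) + of_bool (y \<le> T)"
    and B: "lo \<le> i" "i \<le> hi" "lo \<le> j" "j \<le> hi" "lo \<le> x" "x \<le> hi" "lo \<le> y" "y \<le> hi"
  shows "(x = i \<and> y = j) \<or> (x = j \<and> y = i)"
proof -
  have m1: "\<not> (min i j < min x y)"
  proof
    assume c: "min i j < min x y"
    define t where "t = min i j"
    have t: "lo \<le> t" "t < hi" "t < x" "t < y" "i \<le> t \<or> j \<le> t" using c B by (auto simp: t_def min_def split: if_splits)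
    have "(of_bool (i \<le> t) + of_bool (j \<le> t) :: int) = of_bool (x \<le> t) + of_bool (y \<le> t)" using H t by blast
    then show False using t by (auto simp: of_bool_def split: if_splits)
  qed
  have m2: "\<not> (min x y < min i j)"
  proof
    assume c: "min x y < min i j"
    define t where "t = min x y"
    have t: "lo \<le> t" "t < hi" "t < i" "t < j" "x \<le> t \<or> y \<le> t" using c B by (auto simp: t_def min_def split: if_splits)
    have "(of_bool (i \<le> t) + of_bool (j \<le> t) :: int) = of_bool (x \<le> t) + of_bool (y \<le> t)" using H t by blast
    then show False using t by (auto simp: of_bool_def split: if_splits)
  qed
  have M1: "\<not> (max i j < max x y)"
  proof
    assume c: "max i j < max x y"
    define t where "t = max i j"
    have t: "lo \<le> t" "t < hi" "i \<le> t" "j \<le> t" "t < x \<or> t < y" using c B by (auto simp: t_def max_def split: if_splits)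
    have "(of_bool (i \<le> t) + of_bool (j \<le> t) :: int) = of_bool (x \<le> t) + of_bool (y \<le> t)" using H t by blast
    then show False using t by (auto simp: of_bool_def split: if_splits)
  qed
  have M2: "\<not> (max x y < max i j)"
  proof
    assume c: "max x y < max i j"
    define t where "t = max x y"
    have t: "lo \<le> t" "t < hi" "x \<le> t" "y \<le> t" "t < i \<or> t < j" using c B by (auto simp: t_def max_def split: if_splits)
    have "(of_bool (i \<le> t) + of_bool (j \<le> t) :: int) = of_bool (x \<le> t) + of_bool (y \<le> t)" using H t by blast
    then show False using t by (auto simp: of_bool_def split: if_splits)
  qed
  show ?thesis using m1 m2 M1 M2 by (auto simp: min_def max_def split: if_splits)
qed

lemma chi_swap:
  assumes I: "I \<in> Vkn k n" and J: "J \<in> Vkn k n" and X: "X \<in> Vkn k n" and Y: "Y \<in> Vkn k n"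
    and eq: "(\<lambda>p. chi k n I p + chi k n J p) = (\<lambda>p. chi k n X p + chi k n Y p)"
    and a: "1 \<le> a" "a \<le> k"
  shows "(vent X a = vent I a \<and> vent Y a = vent J a) \<or> (vent X a = vent J a \<and> vent Y a = vent I a)"
proof (rule pair_eq[where lo=a and hi="n - k + a"])
  show "\<forall>T. a \<le> T \<and> T < n - k + a \<longrightarrow> (of_bool (vent I a \<le> T) + of_bool (vent J a \<le> T) :: int) = of_bool (vent X a \<le> T) + of_bool (vent Y a \<le> T)"
  proof (intro allI impI)
    fix T assume T: "a \<le> T \<and> T < n - k + a"
    define b where "b = T + 1 - a"
    have P: "(a, b) \<in> Pkn k n" using T a unfolding b_def Pkn_def by auto
    have Tb: "a + b - 1 = T" using T unfolding b_def by simp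
    from fun_cong[OF eq, of "(a,b)"] P Tb
    show "(of_bool (vent I a \<le> T) + of_bool (vent J a \<le> T) :: int) = of_bool (vent X a \<le> T) + of_bool (vent Y a \<le> T)"
      by (simp add: chi_def split: if_splits)
  qed
qed (use vent_bounds[OF I a] vent_bounds[OF J a] vent_bounds[OF X a] vent_bounds[OF Y a] a in linarith)+

lemma arith_key:
  fixes ia ja ib jb xa xb ya yb :: nat
  assumes "ia < ib" "ja < jb" "xa < xb" "ya < yb" "ia \<noteq> ja" "ib \<noteq> jb" "\<not> arcs_cross ia ib ja jb"
    and sw: "(xa = ia \<and> ya = ja \<and> xb = jb \<and> yb = ib) \<or> (xa = ja \<and> ya = ia \<and> xb = ib \<and> yb = jb)"
  shows "arcs_cross xa xb ya yb \<and> (real ia - real ja) * (real ib - real jb) \<le> -1"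
proof -
  have sg: "(ia < ja \<and> jb < ib) \<or> (ja < ia \<and> ib < jb)"
    using assms unfolding arcs_cross_def by auto
  have c: "arcs_cross xa xb ya yb"
    using sg sw assms(1-4) unfolding arcs_cross_def by auto
  have p: "(real ia - real ja) * (real ib - real jb) \<le> -1"
  proof (cases "ia < ja")
    case True
    then have h1: "real ia - real ja \<le> -1" and h2: "real ib - real jb \<ge> 1" using sg by auto
    have "(real ia - real ja) * (real ib - real jb) \<le> (real ia - real ja)"
      using mult_left_mono_neg[of 1 "real ib - real jb" "real ia - real ja"] h1 h2 by simp
    then show ?thesis using h1 by (rule order_trans)
  next
    case False
    then have h1: "real ia - real ja \<ge> 1" and h2: "real ib - real jb \<le> -1" using sg by auto
    have "(real ia - real ja) * (real ib - real jb) \<le> (real ib - real jb)"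
      using mult_right_mono_neg[of 1 "real ia - real ja" "real ib - real jb"] h1 h2 by simp
    then show ?thesis using h2 by (rule order_trans)
  qed
  show ?thesis using c p by simp
qed


lemma core:
  fixes i j x y :: "nat \<Rightarrow> nat" and k n :: nat and \<alpha> :: "nat \<Rightarrow> real" and \<epsilon> :: real
  assumes inc: "\<And>a b. 1 \<le> a \<Longrightarrow> a < b \<Longrightarrow> b \<le> k \<Longrightarrow> i a < i b \<and> j a < j b \<and> x a < x b \<and> y a < y b"
    and rng: "\<And>a. 1 \<le> a \<Longrightarrow> a \<le> k \<Longrightarrow> i a \<le> n \<and> j a \<le> n"
    and sw: "\<And>a. 1 \<le> a \<Longrightarrow> a \<le> k \<Longrightarrow> (x a = i a \<and> y a = j a) \<or> (x a = j a \<and> y a = i a)"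
    and nt1: "\<exists>a. 1 \<le> a \<and> a \<le> k \<and> \<not> (x a = i a \<and> y a = j a)"
    and nt2: "\<exists>a. 1 \<le> a \<and> a \<le> k \<and> \<not> (x a = j a \<and> y a = i a)"
    and nc: "\<And>a b. 1 \<le> a \<Longrightarrow> a < b \<Longrightarrow> b \<le> k \<Longrightarrow> (\<forall>l. a < l \<and> l < b \<longrightarrow> i l = j l) \<Longrightarrow> \<not> arcs_cross (i a) (i b) (j a) (j b)"
    and epos: "0 < \<epsilon>" and ele1: "\<epsilon> \<le> 1" and ebd: "\<epsilon> * (real k * real k) * (real n * real n) \<le> 1/2"
    and apos: "\<forall>i. 1 \<le> i \<and> i \<le> k - 1 \<longrightarrow> \<alpha> i > 0"
    and adec: "\<forall>i. 1 \<le> i \<and> i < k - 1 \<longrightarrow> \<alpha> (i + 1) < \<epsilon> * \<alpha> i"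
  shows "(\<exists>a b. 1 \<le> a \<and> a < b \<and> b \<le> k \<and> (\<forall>l. a < l \<and> l < b \<longrightarrow> x l = y l) \<and> arcs_cross (x a) (x b) (y a) (y b))
     \<and> (\<Sum>(a, b) \<in> {(a, b). 1 \<le> a \<and> a < b \<and> b \<le> k}.
           \<alpha> (b - a) * (real (x a) * real (x b) + real (y a) * real (y b) - real (i a) * real (i b) - real (j a) * real (j b))) > 0"
proof -
  define D where "D = {a. 1 \<le> a \<and> a \<le> k \<and> i a \<noteq> j a}"
  define s where "s a = (x a \<noteq> i a)" for a
  have sw1: "x a = i a \<and> y a = j a" if "1 \<le> a" "a \<le> k" "\<not> s a" for a
    using sw[OF that(1,2)] that(3) unfolding s_def by auto
  have sw2: "x a = j a \<and> y a = i a" if "1 \<le> a" "a \<le> k" "s a" for a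
    using sw[OF that(1,2)] that(3) unfolding s_def by auto
  have Dout: "x a = i a \<and> y a = i a \<and> j a = i a" if "1 \<le> a" "a \<le> k" "a \<notin> D" for a
    using sw[OF that(1,2)] that unfolding D_def by auto
  define G where "G = {g. \<exists>a b. a \<in> D \<and> b \<in> D \<and> a < b \<and> s a \<noteq> s b \<and> g = b - a}"
  obtain a1 where a1: "1 \<le> a1" "a1 \<le> k" "\<not> (x a1 = i a1 \<and> y a1 = j a1)" using nt1 by blast
  have a1s: "s a1" using sw1[OF a1(1,2)] a1(3) by blast
  have a1D: "a1 \<in> D" using sw[OF a1(1,2)] a1 unfolding D_def by auto
  obtain a2 where a2: "1 \<le> a2" "a2 \<le> k" "\<not> (x a2 = j a2 \<and> y a2 = i a2)" using nt2 by blast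
  have a2s: "\<not> s a2" using sw2[OF a2(1,2)] a2(3) by blast
  have a2D: "a2 \<in> D" using sw[OF a2(1,2)] a2 unfolding D_def by auto
  have Gne: "G \<noteq> {}"
  proof (cases "a1 < a2")
    case True
    then have "a2 - a1 \<in> G" unfolding G_def using a1D a2D a1s a2s by blast
    then show ?thesis by blast
  next
    case False
    then have "a2 < a1" using a1s a2s by (cases "a1 = a2") auto
    then have "a1 - a2 \<in> G" unfolding G_def using a1D a2D a1s a2s by blast
    then show ?thesis by blast
  qed
  have Gfin: "finite G"
    by (rule finite_subset[of _ "{..k}"]) (auto simp: G_def D_def)
  define m where "m = Min G"
  have mG: "m \<in> G" unfolding m_def using Gne Gfin by simp
  have mmin: "m \<le> g" if "g \<in> G" for g unfolding m_def using Gfin that by simp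
  obtain a0 b0 where ab0: "a0 \<in> D" "b0 \<in> D" "a0 < b0" "s a0 \<noteq> s b0" "m = b0 - a0"
    using mG unfolding G_def by blast
  have Dr: "1 \<le> a \<and> a \<le> k" if "a \<in> D" for a using that unfolding D_def by auto
  have m1: "1 \<le> m" "m \<le> k - 1" using ab0 Dr[of a0] Dr[of b0] by auto
  have minpair: "i l = j l \<and> x l = y l"
    if "a \<in> D" "b \<in> D" "a < b" "s a \<noteq> s b" "b - a = m" "a < l" "l < b" for a b l
  proof -
    have lk: "1 \<le> l" "l \<le> k" using that Dr[of a] Dr[of b] by auto
    have "l \<notin> D"
    proof
      assume lD: "l \<in> D"
      show False
      proof (cases "s l = s a")
        case False
        then have "l - a \<in> G" unfolding G_def using lD that by blast
        then show False using mmin[of "l - a"] that by auto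
      next
        case True
        then have "b - l \<in> G" unfolding G_def using lD that by auto
        then show False using mmin[of "b - l"] that by auto
      qed
    qed
    then show ?thesis using Dout[OF lk] by simp
  qed
  have keypair: "arcs_cross (x a) (x b) (y a) (y b) \<and> (real (i a) - real (j a)) * (real (i b) - real (j b)) \<le> -1"
    if "a \<in> D" "b \<in> D" "a < b" "s a \<noteq> s b" "b - a = m" for a b
  proof (rule arith_key)
    have ab: "1 \<le> a" "a \<le> k" "1 \<le> b" "b \<le> k" using Dr that by auto
    show "i a < i b" "j a < j b" "x a < x b" "y a < y b" using inc[of a b] ab that by auto
    show "i a \<noteq> j a" "i b \<noteq> j b" using that unfolding D_def by auto
    show "\<not> arcs_cross (i a) (i b) (j a) (j b)" using nc[of a b] ab that minpair[OF that] by blast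
    show "(x a = i a \<and> y a = j a \<and> x b = j b \<and> y b = i b) \<or> (x a = j a \<and> y a = i a \<and> x b = i b \<and> y b = j b)"
      using that sw1[of a] sw2[of a] sw1[of b] sw2[of b] ab by (cases "s a") auto
  qed
  have cross: "\<exists>a b. 1 \<le> a \<and> a < b \<and> b \<le> k \<and> (\<forall>l. a < l \<and> l < b \<longrightarrow> x l = y l) \<and> arcs_cross (x a) (x b) (y a) (y b)"
    using keypair[OF ab0(1-4) ab0(5)[symmetric]] minpair[OF ab0(1-4) ab0(5)[symmetric]] Dr[OF ab0(1)] Dr[OF ab0(2)] ab0(3)
    by blast
  define E where "E a b = real (x a) * real (x b) + real (y a) * real (y b) - real (i a) * real (i b) - real (j a) * real (j b)" for a b
  have Eform: "E a b = (if s a = s b then 0 else - ((real (i a) - real (j a)) * (real (i b) - real (j b))))"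
    if "1 \<le> a" "a \<le> k" "1 \<le> b" "b \<le> k" for a b
    using sw1[of a] sw2[of a] sw1[of b] sw2[of b] that unfolding E_def
    by (cases "s a"; cases "s b") (auto simp: algebra_simps)
  have chain: "\<forall>g. m < g \<and> g \<le> k - 1 \<longrightarrow> \<alpha> g < \<epsilon> * \<alpha> m"
  proof
    fix g show "m < g \<and> g \<le> k - 1 \<longrightarrow> \<alpha> g < \<epsilon> * \<alpha> m"
    proof (induction g)
      case 0 then show ?case by simp
    next
      case (Suc g)
      show ?case
      proof
        assume h: "m < Suc g \<and> Suc g \<le> k - 1"
        show "\<alpha> (Suc g) < \<epsilon> * \<alpha> m"
        proof (cases "g = m")
          case True then show ?thesis using adec h m1 by auto
        next
          case False
          then have g: "m < g" "g \<le> k - 1" using h by auto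
          then have "\<alpha> g < \<epsilon> * \<alpha> m" using Suc.IH by simp
          moreover have "\<alpha> (Suc g) < \<epsilon> * \<alpha> g" using adec g h m1 by auto
          moreover have "\<epsilon> * \<alpha> g \<le> \<alpha> g" using apos g m1 ele1 by (simp add: mult_left_le_one_le)
          ultimately show ?thesis by linarith
        qed
      qed
    qed
  qed
  have am: "\<alpha> m > 0" using apos m1 by auto
  define Pr where "Pr = {(a, b). 1 \<le> a \<and> a < b \<and> b \<le> k}"
  have Prsub: "Pr \<subseteq> {1..k} \<times> {1..k}" unfolding Pr_def by auto
  have Prfin: "finite Pr" using Prsub finite_subset by blast
  have Prcard: "real (card Pr) \<le> real k * real k"
  proof -
    have "card Pr \<le> card ({1..k} \<times> {1..k})" using Prsub by (intro card_mono) auto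
    then have "card Pr \<le> k * k" by (simp add: card_cartesian_product)
    then have "real (card Pr) \<le> real (k * k)" by (rule of_nat_mono)
    then show ?thesis by simp
  qed
  have ab0P: "(a0, b0) \<in> Pr" unfolding Pr_def using ab0 Dr by auto
  define L where "L p = (if p = (a0, b0) then \<alpha> m else 0) - \<epsilon> * \<alpha> m * (real n * real n)" for p
  have Ebd: "\<bar>E a b\<bar> \<le> real n * real n" if "1 \<le> a" "a \<le> k" "1 \<le> b" "b \<le> k" for a b
  proof -
    have h1: "\<bar>real (i a) - real (j a)\<bar> \<le> real n" using rng[of a] that by auto
    have h2: "\<bar>real (i b) - real (j b)\<bar> \<le> real n" using rng[of b] that by auto
    have "\<bar>(real (i a) - real (j a)) * (real (i b) - real (j b))\<bar> \<le> real n * real n"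
      unfolding abs_mult by (rule mult_mono) (use h1 h2 in auto)
    then show ?thesis using Eform[OF that] by auto
  qed
  have termbd: "L (a, b) \<le> \<alpha> (b - a) * E a b" if "(a, b) \<in> Pr" for a b
  proof -
    have ab: "1 \<le> a" "a < b" "b \<le> k" using that unfolding Pr_def by auto
    have ag: "\<alpha> (b - a) > 0" using apos[rule_format, of "b - a"] ab by linarith
    have negpart: "0 \<le> \<epsilon> * \<alpha> m * (real n * real n)" using epos am by simp
    show ?thesis
    proof (cases "s a \<noteq> s b \<and> a \<in> D \<and> b \<in> D")
      case False
      then have "E a b = 0" using Eform[of a b] ab unfolding D_def by auto
      moreover have "(a, b) \<noteq> (a0, b0)" using False ab0 by auto
      ultimately show ?thesis unfolding L_def using negpart by auto
    next
      case True
      then have "b - a \<in> G" unfolding G_def using ab by blast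
      then have "m \<le> b - a" by (rule mmin)
      then consider "b - a = m" | "m < b - a" by linarith
      then show ?thesis
      proof cases
        case 1
        then have "E a b \<ge> 1" using keypair[of a b] True ab Eform[of a b] by auto
        then have "\<alpha> m \<le> \<alpha> (b - a) * E a b" using 1 ag by simp
        then show ?thesis unfolding L_def using negpart am by auto
      next
        case 2
        then have "\<alpha> (b - a) < \<epsilon> * \<alpha> m" using chain ab by auto
        have "- (\<alpha> (b - a) * (real n * real n)) \<le> \<alpha> (b - a) * E a b"
        proof -
          have "\<bar>\<alpha> (b - a) * E a b\<bar> \<le> \<alpha> (b - a) * (real n * real n)"
            unfolding abs_mult using Ebd[of a b] ab ag by (auto intro: mult_left_mono)
          then show ?thesis by linarith
        qed
        moreover have "\<alpha> (b - a) * (real n * real n) \<le> \<epsilon> * \<alpha> m * (real n * real n)"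
          using \<open>\<alpha> (b - a) < \<epsilon> * \<alpha> m\<close> by (intro mult_right_mono) auto
        moreover have "(a, b) \<noteq> (a0, b0)" using 2 ab0 by auto
        ultimately show ?thesis unfolding L_def by auto
      qed
    qed
  qed
  have "(\<Sum>p\<in>Pr. L p) \<le> (\<Sum>(a, b)\<in>Pr. \<alpha> (b - a) * E a b)"
    by (rule sum_mono) (use termbd in auto)
  moreover have "(\<Sum>p\<in>Pr. L p) = \<alpha> m - real (card Pr) * (\<epsilon> * \<alpha> m * (real n * real n))"
    unfolding L_def using Prfin ab0P by (simp add: sum_subtractf)
  moreover have "real (card Pr) * (\<epsilon> * \<alpha> m * (real n * real n)) \<le> \<alpha> m / 2"
  proof -
    have "real (card Pr) * (\<epsilon> * \<alpha> m * (real n * real n)) \<le> (real k * real k) * (\<epsilon> * \<alpha> m * (real n * real n))"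
      using Prcard epos am by (intro mult_right_mono) auto
    also have "\<dots> = \<alpha> m * (\<epsilon> * (real k * real k) * (real n * real n))" by (simp add: algebra_simps)
    also have "\<dots> \<le> \<alpha> m * (1/2)" using ebd am by (intro mult_left_mono) auto
    finally show ?thesis by simp
  qed
  ultimately have "(\<Sum>(a, b)\<in>Pr. \<alpha> (b - a) * E a b) > 0" using am by linarith
  then show ?thesis using cross unfolding Pr_def E_def by simp
qed


theorem lemma4p5:
  fixes k n :: nat
  assumes "1 \<le> k" and "k \<le> n - 1"
  shows "\<exists>\<epsilon>::real. \<epsilon> > 0 \<and>
    (\<forall>\<alpha> :: nat \<Rightarrow> real.
       (\<forall>i. 1 \<le> i \<and> i \<le> k - 1 \<longrightarrow> \<alpha> i > 0) \<and>
       (\<forall>i. 1 \<le> i \<and> i < k - 1 \<longrightarrow> \<alpha> (i + 1) < \<epsilon> * \<alpha> i) \<longrightarrow>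
       (\<forall>I J X Y. I \<in> Vkn k n \<and> J \<in> Vkn k n \<and> X \<in> Vkn k n \<and> Y \<in> Vkn k n \<and>
          {I, J} \<noteq> {X, Y} \<and> noncrossing k I J \<and>
          (\<lambda>p. chi k n I p + chi k n J p) = (\<lambda>p. chi k n X p + chi k n Y p) \<longrightarrow>
          \<not> noncrossing k X Y \<and> wt k \<alpha> I + wt k \<alpha> J < wt k \<alpha> X + wt k \<alpha> Y))"
proof -
  define \<epsilon> :: real where "\<epsilon> = 1 / (2 * (real k * real k) * (real n * real n))"
  have kn: "real k \<ge> 1" "real n \<ge> 1" using assms by auto
  have p1: "real k * real k \<ge> 1" using mult_mono[of 1 "real k" 1 "real k"] kn by simp
  have p2: "real n * real n \<ge> 1" using mult_mono[of 1 "real n" 1 "real n"] kn by simp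
  have pos: "real k * real k * (real n * real n) \<ge> 1"
    using mult_mono[of 1 "real k * real k" 1 "real n * real n"] p1 p2 by simp
  have epos: "\<epsilon> > 0" unfolding \<epsilon>_def using pos by simp
  have ele1: "\<epsilon> \<le> 1" unfolding \<epsilon>_def using pos by (simp add: field_simps)
  have ebd: "\<epsilon> * (real k * real k) * (real n * real n) \<le> 1/2" unfolding \<epsilon>_def using pos by (simp add: field_simps)
  show ?thesis
  proof (intro exI[of _ \<epsilon>] conjI epos allI impI)
    fix \<alpha> :: "nat \<Rightarrow> real" and I J X Y
    assume ha: "(\<forall>i. 1 \<le> i \<and> i \<le> k - 1 \<longrightarrow> \<alpha> i > 0) \<and> (\<forall>i. 1 \<le> i \<and> i < k - 1 \<longrightarrow> \<alpha> (i + 1) < \<epsilon> * \<alpha> i)"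
    assume h: "I \<in> Vkn k n \<and> J \<in> Vkn k n \<and> X \<in> Vkn k n \<and> Y \<in> Vkn k n \<and>
          {I, J} \<noteq> {X, Y} \<and> noncrossing k I J \<and>
          (\<lambda>p. chi k n I p + chi k n J p) = (\<lambda>p. chi k n X p + chi k n Y p)"
    then have I: "I \<in> Vkn k n" and J: "J \<in> Vkn k n" and X: "X \<in> Vkn k n" and Y: "Y \<in> Vkn k n"
      and ne: "{I, J} \<noteq> {X, Y}" and ncIJ: "noncrossing k I J"
      and eq: "(\<lambda>p. chi k n I p + chi k n J p) = (\<lambda>p. chi k n X p + chi k n Y p)" by auto
    have C: "(\<exists>a b. 1 \<le> a \<and> a < b \<and> b \<le> k \<and> (\<forall>l. a < l \<and> l < b \<longrightarrow> vent X l = vent Y l) \<and> arcs_cross (vent X a) (vent X b) (vent Y a) (vent Y b))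
     \<and> (\<Sum>(a, b) \<in> {(a, b). 1 \<le> a \<and> a < b \<and> b \<le> k}.
           \<alpha> (b - a) * (real (vent X a) * real (vent X b) + real (vent Y a) * real (vent Y b) - real (vent I a) * real (vent I b) - real (vent J a) * real (vent J b))) > 0"
    proof (rule core[where n=n and \<epsilon>=\<epsilon>])
      show "vent I a < vent I b \<and> vent J a < vent J b \<and> vent X a < vent X b \<and> vent Y a < vent Y b"
        if "1 \<le> a" "a < b" "b \<le> k" for a b
        using vent_less[OF I that] vent_less[OF J that] vent_less[OF X that] vent_less[OF Y that] by simp
      show "vent I a \<le> n \<and> vent J a \<le> n" if "1 \<le> a" "a \<le> k" for a
        using vent_le_n[OF I that] vent_le_n[OF J that] by simp
      show "(vent X a = vent I a \<and> vent Y a = vent J a) \<or> (vent X a = vent J a \<and> vent Y a = vent I a)"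
        if "1 \<le> a" "a \<le> k" for a using chi_swap[OF I J X Y eq that] .
      show "\<exists>a. 1 \<le> a \<and> a \<le> k \<and> \<not> (vent X a = vent I a \<and> vent Y a = vent J a)"
      proof (rule ccontr)
        assume "\<not> ?thesis"
        then have "X = I" "Y = J" using vent_eq_list[OF I X] vent_eq_list[OF J Y] by auto
        then show False using ne by simp
      qed
      show "\<exists>a. 1 \<le> a \<and> a \<le> k \<and> \<not> (vent X a = vent J a \<and> vent Y a = vent I a)"
      proof (rule ccontr)
        assume "\<not> ?thesis"
        then have "X = J" "Y = I" using vent_eq_list[OF J X] vent_eq_list[OF I Y] by auto
        then show False using ne by auto
      qed
      show "\<not> arcs_cross (vent I a) (vent I b) (vent J a) (vent J b)"
        if "1 \<le> a" "a < b" "b \<le> k" "\<forall>l. a < l \<and> l < b \<longrightarrow> vent I l = vent J l" for a b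
        using ncIJ that unfolding noncrossing_def by blast
    qed (use epos ele1 ebd ha in auto)
    have nX: "\<not> noncrossing k X Y" using C unfolding noncrossing_def by blast
    have "wt k \<alpha> X + wt k \<alpha> Y - wt k \<alpha> I - wt k \<alpha> J = (\<Sum>(a, b) \<in> {(a, b). 1 \<le> a \<and> a < b \<and> b \<le> k}.
           \<alpha> (b - a) * (real (vent X a) * real (vent X b) + real (vent Y a) * real (vent Y b) - real (vent I a) * real (vent I b) - real (vent J a) * real (vent J b)))"
      unfolding wt_def by (simp add: split_def sum_subtractf[symmetric] sum.distrib[symmetric] algebra_simps)
    then show "wt k \<alpha> I + wt k \<alpha> J < wt k \<alpha> X + wt k \<alpha> Y"
      using C by linarith
    show "\<not> noncrossing k X Y" by (rule nX)
  qed
qed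

end
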